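(* Fix $\lambda>0$ and let $M_\lambda$ be as in the context. Then for all $x\ge3$, \[ \inf_{x-1\le t\le x}M'_\lambda(t)\le\inf_{x\le t\le x+1}M'_\lambda(t)\le \sup_{x\le t\le x+1}M'_\lambda(t)\le \sup_{x-1\le t\le x}M'_\lambda(t). \]
   Context: For $\lambda>0$, $M_\lambda:[0,\infty)\to\mathbb R$ is defined by $M_\lambda(x)=0$ for $0\le x\le1$ and, for all $x>0$, $M_{\lambda}(x+1)=\int_0^x\frac{\lambda e^{-\lambda t}}{1-e^{-\lambda x}}\bigl(M_{\lambda}(t)+M_{\lambda}(x-t)\bigr)\,dt+1$. $M_\lambda(x)$ is the expected number of unit intervals at saturation in the parking process on $(0,x)$ with truncated exponential left-endpoint density. $M_\lambda$ is differentiable on $(2,\infty)$, which is the range where the derivatives in the claim are evaluated. *)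

theory Defs
  imports "HOL-Analysis.Analysis"
begin

end

theory Submission
  imports Defs
begin

locale park =
  fixes lam :: real and M :: "real \<Rightarrow> real"
  assumes lam_pos: "lam > 0"
    and init: "\<forall>y\<in>{0..1}. M y = 0"
    and rec: "\<forall>y>0. M (y + 1) =
        integral {0..y} (\<lambda>t. lam * exp (- lam * t) / (1 - exp (- lam * y)) * (M t + M (y - t))) + 1"
begin

definition A :: "real \<Rightarrow> real" where "A = (\<lambda>y. integral {0..y} (\<lambda>t. exp (- lam * t) * M t))"
definition B :: "real \<Rightarrow> real" where "B = (\<lambda>y. integral {0..y} (\<lambda>t. exp (lam * t) * M t))"
definition N :: "real \<Rightarrow> real" where
  "N = (\<lambda>y. 1 + lam * (exp (lam * y) * A y + B y) / (exp (lam * y) - 1))"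
definition D :: "real \<Rightarrow> real" where
  "D = (\<lambda>y. lam * (M y * ((exp (lam * y))\<^sup>2 - 1) - lam * exp (lam * y) * (A y + B y)) / (exp (lam * y) - 1)\<^sup>2)"

lemma M_one:
  assumes "1 < t" "t \<le> 2" shows "M t = 1"
proof -
  have y: "t - 1 > 0" using assms by simp
  have "integral {0..t-1} (\<lambda>s. lam * exp (- lam * s) / (1 - exp (- lam * (t-1))) * (M s + M (t - 1 - s)))
      = integral {0..t-1} (\<lambda>s. 0)"
    by (rule integral_cong) (use init assms in auto)
  moreover have "M (t - 1 + 1) = integral {0..t-1} (\<lambda>s. lam * exp (- lam * s) / (1 - exp (- lam * (t-1))) * (M s + M (t - 1 - s))) + 1"
    using rec y by blast
  ultimately show ?thesis by simp
qed

lemma alg1: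
  fixes E l a b :: real
  assumes "E > 1"
  shows "l / (1 - 1 / E) * a + l / (1 - 1 / E) * (1 / E) * b + 1 = 1 + l * (E * a + b) / (E - 1)"
proof -
  have ne: "E - 1 \<noteq> 0" "E \<noteq> 0" using assms by auto
  have h: "l / (1 - 1/E) = l*E/(E-1)" using ne by (simp add: field_simps)
  have h2: "l*E/(E-1)*(1/E) = l/(E-1)" using ne by simp
  show ?thesis unfolding h h2 by (simp add: add_divide_distrib algebra_simps)
qed

lemma integrable_M:
  assumes cont: "continuous_on {1<..X} M" and X: "2 \<le> X"
  shows "(\<lambda>t. exp (c * t) * M t) integrable_on {0..X}"
proof -
  have i1: "(\<lambda>t. exp (c * t) * M t) integrable_on {0..1}"
    by (rule integrable_eq[of "\<lambda>t. 0"]) (use init in auto)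
  have i2: "(\<lambda>t. exp (c * t) * M t) integrable_on {1..2}"
  proof (rule integrable_spike_finite[where S="{1}" and f="\<lambda>t. exp (c * t)"])
    show "(\<lambda>t. exp (c * t)) integrable_on {1..2}"
      by (intro integrable_continuous_interval continuous_intros)
  qed (auto simp: M_one)
  have "continuous_on {2..X} M" using cont by (rule continuous_on_subset) auto
  then have i3: "(\<lambda>t. exp (c * t) * M t) integrable_on {2..X}"
    by (intro integrable_continuous_interval continuous_intros)
  show ?thesis
    by (rule Henstock_Kurzweil_Integration.integrable_combine[OF _ _ i1 Henstock_Kurzweil_Integration.integrable_combine[OF _ _ i2 i3]]) (use X in auto)
qed

lemma R:
  assumes y: "0 < y"
    and i1: "(\<lambda>t. exp (- lam * t) * M t) integrable_on {0..y}"
    and i2: "(\<lambda>t. exp (lam * t) * M t) integrable_on {0..y}"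
  shows "M (y + 1) = N y"
proof -
  define c where "c = lam / (1 - exp (- lam * y))"
  have h1: "((\<lambda>t. exp (- lam * t) * M t) has_integral A y) {0..y}"
    unfolding A_def using i1 by (rule integrable_integral)
  have h2: "((\<lambda>t. exp (lam * t) * M t) has_integral B y) {0..y}"
    unfolding B_def using i2 by (rule integrable_integral)
  have "((\<lambda>x. exp (lam * (x + y)) * M (x + y)) has_integral B y) {0-y..y-y}"
    by (rule has_integral_shift_real_ivl[OF h2])
  then have "((\<lambda>x. exp (lam * (-x + y)) * M (-x + y)) has_integral B y) {0..y}"
    using iffD2[OF has_integral_reflect_real[where f="\<lambda>x. exp (lam * (x + y)) * M (x + y)" and i="B y" and a="-y" and b=0]]
    by simp
  then have h3: "((\<lambda>t. exp (lam * (y - t)) * M (y - t)) has_integral B y) {0..y}"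
    by simp
  have h4: "((\<lambda>t. c * (exp (- lam * t) * M t) + c * exp (- lam * y) * (exp (lam * (y - t)) * M (y - t)))
       has_integral (c * A y + c * exp (- lam * y) * B y)) {0..y}"
    by (intro has_integral_add has_integral_mult_right h1 h3)
  have eq: "lam * exp (- lam * t) / (1 - exp (- lam * y)) * (M t + M (y - t)) =
     c * (exp (- lam * t) * M t) + c * exp (- lam * y) * (exp (lam * (y - t)) * M (y - t))" for t
  proof -
    have ex: "exp (- lam * y) * exp (lam * (y - t)) = exp (- lam * t)"
      by (subst exp_add[symmetric]) (simp add: algebra_simps)
    show ?thesis unfolding c_def ex[symmetric] by (simp add: algebra_simps add_divide_distrib)
  qed
  have "integral {0..y} (\<lambda>t. lam * exp (- lam * t) / (1 - exp (- lam * y)) * (M t + M (y - t)))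
     = integral {0..y} (\<lambda>t. c * (exp (- lam * t) * M t) + c * exp (- lam * y) * (exp (lam * (y - t)) * M (y - t)))"
    by (rule integral_cong) (rule eq)
  also have "\<dots> = c * A y + c * exp (- lam * y) * B y" by (rule integral_unique[OF h4])
  finally have I: "integral {0..y} (\<lambda>t. lam * exp (- lam * t) / (1 - exp (- lam * y)) * (M t + M (y - t))) = c * A y + c * exp (- lam * y) * B y" .
  have r: "M (y + 1) = integral {0..y} (\<lambda>t. lam * exp (- lam * t) / (1 - exp (- lam * y)) * (M t + M (y - t))) + 1"
    by (rule rec[rule_format, OF y])
  have "M (y + 1) = c * A y + c * exp (- lam * y) * B y + 1"
    by (simp only: r I)
  moreover have "exp (lam * y) > 1" using y lam_pos by simp
  moreover have e: "exp (- lam * y) = 1 / exp (lam*y)" by (simp add: exp_minus inverse_eq_divide)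
  ultimately show ?thesis unfolding N_def c_def e using alg1 by simp
qed

lemma cont_n: "continuous_on {1<..real n + 2} M"
proof (induction n)
  case 0
  have "continuous_on {1<..2::real} (\<lambda>_. 1::real)" by simp
  then have "continuous_on {1<..2} M" by (rule continuous_on_eq) (auto simp: M_one)
  then show ?case by simp
next
  case (Suc n)
  define X where "X = real n + 2"
  have X2: "2 \<le> X" unfolding X_def by simp
  have cX: "continuous_on {1<..X} M" using Suc unfolding X_def .
  have i1: "(\<lambda>t. exp (- lam * t) * M t) integrable_on {0..X}" using integrable_M[OF cX X2] .
  have i2: "(\<lambda>t. exp (lam * t) * M t) integrable_on {0..X}" using integrable_M[OF cX X2] .
  have cA: "continuous_on {0..X} A" unfolding A_def by (rule indefinite_integral_continuous_1[OF i1])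
  have cB: "continuous_on {0..X} B" unfolding B_def by (rule indefinite_integral_continuous_1[OF i2])
  have cA': "continuous_on {0<..X} A" using cA by (rule continuous_on_subset) auto
  have cB': "continuous_on {0<..X} B" using cB by (rule continuous_on_subset) auto
  have cN: "continuous_on {0<..X} N"
    unfolding N_def using lam_pos
    by (intro continuous_intros cA' cB') auto
  have "continuous_on {1<..X+1} (\<lambda>z. N (z - 1))"
    by (rule continuous_on_compose2[OF cN]) (auto intro!: continuous_intros)
  moreover have "N (z - 1) = M z" if "z \<in> {1<..X+1}" for z
  proof -
    have "M (z - 1 + 1) = N (z - 1)"
      by (rule R[OF _ integrable_on_subinterval[OF i1] integrable_on_subinterval[OF i2]]) (use that in auto)
    then show ?thesis by simp
  qed
  ultimately have "continuous_on {1<..X+1} M" by (rule continuous_on_eq)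
  then show ?case unfolding X_def by (simp add: add.commute add.left_commute)
qed

lemma isCont_M: assumes "1 < z" shows "isCont M z"
proof -
  obtain n :: nat where n: "z < real n" using reals_Archimedean2 by blast
  have "continuous_on {1<..<real n + 2} M" using cont_n[of n] by (rule continuous_on_subset) auto
  then show ?thesis using continuous_on_eq_continuous_at[of "{1<..<real n + 2}" M] assms n by auto
qed

lemma cont_M: "continuous_on {1<..} M"
  using isCont_M by (intro continuous_at_imp_continuous_on) auto

lemma integrable_all:
  assumes "0 \<le> y" shows "(\<lambda>t. exp (c * t) * M t) integrable_on {0..y}"
proof -
  have "continuous_on {1<..max 2 y} M" using cont_M by (rule continuous_on_subset) auto
  from integrable_M[OF this] have "(\<lambda>t. exp (c * t) * M t) integrable_on {0..max 2 y}" by simp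
  then show ?thesis by (rule integrable_on_subinterval) auto
qed

lemma R_all: "0 < y \<Longrightarrow> M (y + 1) = N y"
  by (rule R[OF _ integrable_all integrable_all]) auto

lemma DA: assumes "1 < y" shows "(A has_real_derivative exp (- lam * y) * M y) (at y)"
proof -
  have ic: "isCont (\<lambda>t. exp (- lam * t) * M t) y"
    by (rule isCont_mult[OF _ isCont_M[OF assms]]) (intro continuous_intros)
  have "((\<lambda>u. integral {0..u} (\<lambda>t. exp (- lam * t) * M t)) has_vector_derivative exp (- lam * y) * M y)
     (at y within ({0..y+1} - {}))"
    by (rule integral_has_vector_derivative_continuous_at[OF integrable_all _ _ continuous_at_imp_continuous_at_within[OF ic]])
       (use assms in auto)
  moreover have "at y within ({0..y+1} - {}) = at y"
    using assms by (intro at_within_interior) auto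
  ultimately show ?thesis unfolding A_def has_real_derivative_iff_has_vector_derivative by simp
qed

lemma DB: assumes "1 < y" shows "(B has_real_derivative exp (lam * y) * M y) (at y)"
proof -
  have ic: "isCont (\<lambda>t. exp (lam * t) * M t) y"
    by (rule isCont_mult[OF _ isCont_M[OF assms]]) (intro continuous_intros)
  have "((\<lambda>u. integral {0..u} (\<lambda>t. exp (lam * t) * M t)) has_vector_derivative exp (lam * y) * M y)
     (at y within ({0..y+1} - {}))"
    by (rule integral_has_vector_derivative_continuous_at[OF integrable_all _ _ continuous_at_imp_continuous_at_within[OF ic]])
       (use assms in auto)
  moreover have "at y within ({0..y+1} - {}) = at y"
    using assms by (intro at_within_interior) auto
  ultimately show ?thesis unfolding B_def has_real_derivative_iff_has_vector_derivative by simp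
qed

lemma alg2:
  fixes E em l m a b :: real
  assumes E: "E > 1" and em: "em * E = 1"
  shows "0 + (l * (E * (l * 1) * a + em * m * E + E * m) * (E - 1) - l * (E * a + b) * (E * (l * 1) - 0)) / ((E - 1) * (E - 1))
    = l * (m * (E\<^sup>2 - 1) - l * E * (a + b)) / (E - 1)\<^sup>2"
proof -
  have h: "em * m * E = m" using em by (metis mult.commute mult.left_commute mult_1_right)
  have "l * (E * (l * 1) * a + em * m * E + E * m) * (E - 1) - l * (E * a + b) * (E * (l * 1) - 0)
     = l * (m * (E\<^sup>2 - 1) - l * E * (a + b))" unfolding h by (simp add: algebra_simps power2_eq_square)
  then show ?thesis by (simp add: power2_eq_square)
qed

lemma dE: "((\<lambda>y. exp (lam * y)) has_real_derivative exp (lam * y) * (lam * 1)) (at y)"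
  by (rule DERIV_fun_exp[OF DERIV_cmult[OF DERIV_ident]])

lemma DN: assumes y: "1 < y" shows "(N has_real_derivative D y) (at y)"
proof -
  have ne: "exp (lam * y) - 1 \<noteq> 0" using y lam_pos by simp
  note d = DERIV_add[OF DERIV_const DERIV_divide[OF DERIV_cmult[OF DERIV_add[OF DERIV_mult[OF dE DA[OF y]] DB[OF y]]] DERIV_diff[OF dE DERIV_const] ne], of 1 lam]
  have E: "exp (lam * y) > 1" using y lam_pos by simp
  have em: "exp (- lam * y) * exp (lam * y) = 1" by (simp add: exp_minus)
  show ?thesis unfolding N_def D_def
    by (rule DERIV_cong[OF d]) (simp only: alg2[OF E em])
qed

lemma DM: assumes z: "2 < z" shows "(M has_real_derivative D (z - 1)) (at z)"
proof -
  have "((\<lambda>y. M (y + 1)) has_real_derivative D (z - 1)) (at (z - 1))"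
    by (rule has_field_derivative_transform_within_open[OF DN[of "z-1"], where S="{0<..}"])
       (use z R_all in auto)
  then have "(M has_real_derivative D (z - 1)) (at (z - 1 + 1))" by (simp only: DERIV_shift)
  then show ?thesis by simp
qed

lemma deriv_M: "2 < z \<Longrightarrow> deriv M z = D (z - 1)"
  using DM by (rule DERIV_imp_deriv)


lemma isCont_D: assumes y: "1 < y" shows "isCont D y"
proof -
  have ne: "(exp (lam * y) - 1)\<^sup>2 \<noteq> 0" using y lam_pos by simp
  have cA: "isCont A y" by (rule DERIV_isCont[OF DA[OF y]])
  have cB: "isCont B y" by (rule DERIV_isCont[OF DB[OF y]])
  have cM: "isCont M y" by (rule isCont_M[OF y])
  have cE: "isCont (\<lambda>y. exp (lam * y)) y" by (intro continuous_intros)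
  show ?thesis unfolding D_def
    by (rule isCont_divide isCont_mult isCont_diff isCont_add isCont_power continuous_const cA cB cM cE ne)+
qed

lemma fin0:
  fixes G k mp P :: real
  assumes "G \<noteq> 0"
  shows "G * (k * (mp * G\<^sup>2 - P)) / (G\<^sup>2 * G\<^sup>2) = k / G * (mp - P / G\<^sup>2)"
  using assms apply (simp add: field_simps)
  apply (simp add: eval_nat_numeral algebra_simps)
  done

lemma alg3:
  fixes E em l mp m a b :: real
  assumes E: "E > 1" and em: "em * E = 1"
  shows "(l * (mp * (E\<^sup>2 - 1) + (real 2 * (E * (l * 1) * E ^ (2 - Suc 0)) - 0) * m -
       (l * (E * (l * 1)) * (a + b) + (em * m + E * m) * (l * E))) * (E - 1)\<^sup>2 -
      l * (m * (E\<^sup>2 - 1) - l * E * (a + b)) * (real 2 * ((E * (l * 1) - 0) * (E - 1) ^ (2 - Suc 0)))) /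
     ((E - 1)\<^sup>2 * (E - 1)\<^sup>2) =
     l * (E + 1) / (E - 1) * (mp - l * (m * (E\<^sup>2 - 1) - l * E * (a + b)) / (E - 1)\<^sup>2)"
proof -
  define P where "P = l * (m * (E\<^sup>2 - 1) - l * E * (a + b))"
  have G: "E - 1 \<noteq> 0" using E by simp
  have t: "(em * m + E * m) * (l * E) = l * m + l * E\<^sup>2 * m"
  proof -
    have "(em * m + E * m) * (l * E) = (em * E) * (l * m) + l * E\<^sup>2 * m"
      by (simp add: algebra_simps power2_eq_square)
    then show ?thesis using em by simp
  qed
  have d2: "real 2 * ((E * (l * 1) - 0) * (E - 1) ^ (2 - Suc 0)) = 2 * (l * E * (E - 1))" by simp
  have d1: "real 2 * (E * (l * 1) * E ^ (2 - Suc 0)) - 0 = 2 * l * E\<^sup>2" by (simp add: power2_eq_square)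
  have Nd: "l * (mp * (E\<^sup>2 - 1) + 2 * l * E\<^sup>2 * m - (l * (E * (l * 1)) * (a + b) + (l * m + l * E\<^sup>2 * m)))
      = l * mp * (E\<^sup>2 - 1) + l * P"
    unfolding P_def by (simp add: algebra_simps power2_eq_square)
  have num: "(l * mp * (E\<^sup>2 - 1) + l * P) * (E - 1)\<^sup>2 - l * (m * (E\<^sup>2 - 1) - l * E * (a + b)) * (2 * (l * E * (E - 1)))
      = (E - 1) * (l * (E + 1) * (mp * (E - 1)\<^sup>2 - P))"
    unfolding P_def by (simp add: algebra_simps power2_eq_square)
  have fin: "(E - 1) * (k * (mp * (E - 1)\<^sup>2 - P)) / ((E - 1)\<^sup>2 * (E - 1)\<^sup>2) = k / (E - 1) * (mp - P / (E - 1)\<^sup>2)" for k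
    using fin0[OF G] .
  show ?thesis
    apply (unfold t d1 d2 Nd)
    apply (unfold num)
    apply (unfold P_def[symmetric])
    by (rule fin)
qed

lemma DD: assumes y: "2 < y"
  shows "(D has_real_derivative lam * (exp (lam * y) + 1) / (exp (lam * y) - 1) * (D (y - 1) - D y)) (at y)"
proof -
  have y1: "1 < y" using y by simp
  have ne: "(exp (lam * y) - 1)\<^sup>2 \<noteq> 0" using y lam_pos by simp
  note d = DERIV_divide[OF DERIV_cmult[where c=lam, OF DERIV_diff[OF DERIV_mult[OF DM[OF y] DERIV_diff[OF DERIV_power[where n=2, OF dE] DERIV_const[where k=1]]] DERIV_mult[OF DERIV_cmult[where c=lam, OF dE] DERIV_add[OF DA[OF y1] DB[OF y1]]]]] DERIV_power[where n=2, OF DERIV_diff[OF dE DERIV_const]] ne]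
  have Dy: "D y = lam * (M y * ((exp (lam * y))\<^sup>2 - 1) - lam * exp (lam * y) * (A y + B y)) / (exp (lam * y) - 1)\<^sup>2"
    by (simp add: D_def)
  have E: "exp (lam * y) > 1" using y lam_pos by simp
  have em: "exp (- lam * y) * exp (lam * y) = 1" by (simp add: exp_minus)
  show ?thesis unfolding Dy
    by (rule DERIV_cong[OF d[folded D_def]]) (rule alg3[OF E em])
qed

lemma D_bounded:
  assumes X: "2 \<le> X" shows "\<exists>K. \<forall>y\<in>{1<..X}. \<bar>D y\<bar> \<le> K"
proof -
  define Mc where "Mc = (\<lambda>t. if t \<le> 1 then 1 else M t)"
  have c1: "continuous_on {1..2} Mc"
    by (rule continuous_on_eq[OF continuous_on_const[of _ 1]]) (auto simp: Mc_def M_one)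
  have c2: "continuous_on {2..X} Mc"
    by (rule continuous_on_eq[OF continuous_on_subset[OF cont_M]]) (auto simp: Mc_def)
  have "continuous_on ({1..2} \<union> {2..X}) Mc"
    by (rule continuous_on_closed_Un[OF closed_atLeastAtMost closed_atLeastAtMost c1 c2])
  moreover have "{1..2} \<union> {2..X} = {1..X}" using X by auto
  ultimately have cMc: "continuous_on {1..X} Mc" by simp
  have cA: "continuous_on {1..X} A"
    unfolding A_def
    by (rule continuous_on_subset[OF indefinite_integral_continuous_1[OF integrable_all[of X]]]) (use X in auto)
  have cB: "continuous_on {1..X} B"
    unfolding B_def
    by (rule continuous_on_subset[OF indefinite_integral_continuous_1[OF integrable_all[of X]]]) (use X in auto)
  define Dc where "Dc = (\<lambda>y. lam * (Mc y * ((exp (lam * y))\<^sup>2 - 1) - lam * exp (lam * y) * (A y + B y)) / (exp (lam * y) - 1)\<^sup>2)"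
  have nz: "\<forall>y\<in>{1..X}. (exp (lam * y) - 1)\<^sup>2 \<noteq> 0" using lam_pos by auto
  have cDc: "continuous_on {1..X} Dc"
    unfolding Dc_def
    by (intro continuous_on_divide continuous_on_mult continuous_on_diff continuous_on_add continuous_on_power
        continuous_on_const cMc cA cB nz continuous_on_exp continuous_on_id)
  have "bounded (Dc ` {1..X})" by (rule compact_imp_bounded[OF compact_continuous_image[OF cDc compact_Icc]])
  then obtain K where K: "\<forall>v\<in>Dc ` {1..X}. norm v \<le> K" unfolding bounded_iff by blast
  have "\<bar>D y\<bar> \<le> K" if "y \<in> {1<..X}" for y
  proof -
    have "D y = Dc y" using that unfolding D_def Dc_def Mc_def by simp
    then show ?thesis using K that by auto
  qed
  then show ?thesis by blast
qed

lemma main: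
  assumes x: "3 \<le> x"
  shows "Inf (deriv M ` {x - 1..x}) \<le> Inf (deriv M ` {x..x + 1})
       \<and> Inf (deriv M ` {x..x + 1}) \<le> Sup (deriv M ` {x..x + 1})
       \<and> Sup (deriv M ` {x..x + 1}) \<le> Sup (deriv M ` {x - 1..x})"
proof -
  obtain K where K: "\<forall>y\<in>{1<..x}. \<bar>D y\<bar> \<le> K" using D_bounded[of x] x by auto
  define K' where "K' = max K \<bar>deriv M 2\<bar>"
  have bnd: "\<bar>deriv M t\<bar> \<le> K'" if "t \<in> {x-1..x+1}" for t
  proof (cases "t = 2")
    case True then show ?thesis by (simp add: K'_def)
  next
    case False then have t2: "t > 2" using that x by auto
    then have "deriv M t = D (t - 1)" by (rule deriv_M)
    moreover have "t - 1 \<in> {1<..x}" using t2 that by auto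
    ultimately show ?thesis using K unfolding K'_def by force
  qed
  have bnd': "deriv M t \<le> K' \<and> -K' \<le> deriv M t" if "t \<in> {x-1..x+1}" for t
    using bnd[OF that] by (simp add: abs_le_iff)
  define S1 where "S1 = deriv M ` {x - 1..x}"
  define S2 where "S2 = deriv M ` {x..x + 1}"
  have ne1: "S1 \<noteq> {}" "S2 \<noteq> {}" using x unfolding S1_def S2_def by auto
  have bdd1a: "bdd_above S1" unfolding S1_def
    by (rule bdd_aboveI2[where M=K']) (use x in \<open>auto intro!: bnd'[THEN conjunct1]\<close>)
  have bdd1b: "bdd_below S1" unfolding S1_def
    by (rule bdd_belowI2[where m="-K'"]) (use x in \<open>auto intro!: bnd'[THEN conjunct2]\<close>)
  note bdd1 = bdd1a bdd1b
  have bdd2a: "bdd_above S2" unfolding S2_def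
    by (rule bdd_aboveI2[where M=K']) (use x in \<open>auto intro!: bnd'[THEN conjunct1]\<close>)
  have bdd2b: "bdd_below S2" unfolding S2_def
    by (rule bdd_belowI2[where m="-K'"]) (use x in \<open>auto intro!: bnd'[THEN conjunct2]\<close>)
  note bdd2 = bdd2a bdd2b
  have cD: "continuous_on {x-1..x} D"
    by (intro continuous_at_imp_continuous_on ballI isCont_D) (use x in auto)
  have le: "deriv M t \<le> Sup S1" if "t \<in> {x-1..x}" for t
    unfolding S1_def using cSup_upper[OF imageI[OF that] bdd1(1)[unfolded S1_def]] .
  have ge: "Inf S1 \<le> deriv M t" if "t \<in> {x-1..x}" for t
    unfolding S1_def using cInf_lower[OF imageI[OF that] bdd1(2)[unfolded S1_def]] .
  have Dx: "D (x - 1) = deriv M x" using deriv_M[of x] x by simp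
  have up: "D y \<le> Sup S1" if y: "y \<in> {x-1..x}" for y
  proof (rule ccontr)
    assume nle: "\<not> D y \<le> Sup S1"
    obtain ys where ys: "ys \<in> {x-1..x}" "\<forall>z\<in>{x-1..x}. D z \<le> D ys"
      using continuous_attains_sup[OF compact_Icc _ cD] x by auto
    have big: "D ys > Sup S1" using ys y nle by force
    have "D (x - 1) \<le> Sup S1" using le[of x] x Dx by simp
    then have "ys \<noteq> x - 1" using big by auto
    then have ys2: "ys > x - 1" "ys > 2" using ys x by auto
    have dMys: "deriv M ys = D (ys - 1)" using deriv_M ys2 by simp
    have E: "exp (lam * ys) > 1" using lam_pos ys2 by simp
    have c: "lam * (exp (lam * ys) + 1) / (exp (lam * ys) - 1) > 0"
      using lam_pos E by (intro divide_pos_pos mult_pos_pos) (auto simp: add_pos_pos)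
    have "D (ys - 1) - D ys < 0" using le[of ys] ys dMys big by auto
    then have neg: "lam * (exp (lam * ys) + 1) / (exp (lam * ys) - 1) * (D (ys - 1) - D ys) < 0"
      by (rule mult_pos_neg[OF c])
    obtain d where d: "d > 0" "\<forall>h>0. h < d \<longrightarrow> D ys < D (ys - h)"
      using DERIV_neg_dec_left[OF DD[OF ys2(2)] neg] by blast
    define h where "h = min (d/2) ((ys - (x-1))/2)"
    have h1: "h > 0" using d ys2 by (simp add: h_def)
    have h2: "h < d" using d by (simp add: h_def min_def)
    have h3: "h \<le> (ys - (x-1))/2" unfolding h_def by (rule min.cobounded2)
    have h: "h > 0" "h < d" "ys - h \<in> {x-1..x}" using h1 h2 h3 ys by auto
    then show False using d ys by force
  qed
  have low: "Inf S1 \<le> D y" if y: "y \<in> {x-1..x}" for y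
  proof (rule ccontr)
    assume nle: "\<not> Inf S1 \<le> D y"
    obtain ys where ys: "ys \<in> {x-1..x}" "\<forall>z\<in>{x-1..x}. D ys \<le> D z"
      using continuous_attains_inf[OF compact_Icc _ cD] x by auto
    have small: "D ys < Inf S1" using ys y nle by force
    have "Inf S1 \<le> D (x - 1)" using ge[of x] x Dx by simp
    then have "ys \<noteq> x - 1" using small by auto
    then have ys2: "ys > x - 1" "ys > 2" using ys x by auto
    have dMys: "deriv M ys = D (ys - 1)" using deriv_M ys2 by simp
    have E: "exp (lam * ys) > 1" using lam_pos ys2 by simp
    have c: "lam * (exp (lam * ys) + 1) / (exp (lam * ys) - 1) > 0"
      using lam_pos E by (intro divide_pos_pos mult_pos_pos) (auto simp: add_pos_pos)
    have "D (ys - 1) - D ys > 0" using ge[of ys] ys dMys small by auto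
    then have pos: "lam * (exp (lam * ys) + 1) / (exp (lam * ys) - 1) * (D (ys - 1) - D ys) > 0"
      by (rule mult_pos_pos[OF c])
    obtain d where d: "d > 0" "\<forall>h>0. h < d \<longrightarrow> D (ys - h) < D ys"
      using DERIV_pos_inc_left[OF DD[OF ys2(2)] pos] by blast
    define h where "h = min (d/2) ((ys - (x-1))/2)"
    have h1: "h > 0" using d ys2 by (simp add: h_def)
    have h2: "h < d" using d by (simp add: h_def min_def)
    have h3: "h \<le> (ys - (x-1))/2" unfolding h_def by (rule min.cobounded2)
    have h: "h > 0" "h < d" "ys - h \<in> {x-1..x}" using h1 h2 h3 ys by auto
    then show False using d ys by force
  qed
  have S2b: "Inf S1 \<le> v \<and> v \<le> Sup S1" if vS: "v \<in> S2" for v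
  proof -
    obtain t where t: "t \<in> {x..x+1}" "v = deriv M t" using vS unfolding S2_def by auto
    then have "v = D (t - 1)" using deriv_M[of t] x by auto
    moreover have "t - 1 \<in> {x-1..x}" using t by auto
    ultimately show ?thesis using up low by auto
  qed
  have "Inf S1 \<le> Inf S2" by (rule cInf_greatest[OF ne1(2)]) (use S2b in auto)
  moreover have "Inf S2 \<le> Sup S2" by (rule cInf_le_cSup[OF ne1(2) bdd2])
  moreover have "Sup S2 \<le> Sup S1" by (rule cSup_least[OF ne1(2)]) (use S2b in auto)
  ultimately show ?thesis unfolding S1_def S2_def by blast
qed

end

theorem mainTheorem9:
  fixes lam x :: real and M :: "real \<Rightarrow> real"
  assumes lam_pos: "lam > 0"
    and init: "\<forall>y\<in>{0..1}. M y = 0"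
    and rec: "\<forall>y>0. M (y + 1) =
        integral {0..y} (\<lambda>t. lam * exp (- lam * t) / (1 - exp (- lam * y)) * (M t + M (y - t))) + 1"
    and x_ge: "x \<ge> 3"
  shows "Inf (deriv M ` {x - 1..x}) \<le> Inf (deriv M ` {x..x + 1})
       \<and> Inf (deriv M ` {x..x + 1}) \<le> Sup (deriv M ` {x..x + 1})
       \<and> Sup (deriv M ` {x..x + 1}) \<le> Sup (deriv M ` {x - 1..x})"
proof -
  interpret park lam M by (rule park.intro[OF lam_pos init rec])
  show ?thesis by (rule main[OF x_ge])
qed

end
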